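(* Let $A$ be a closed $\forall^+$ type of system $\mathcal F$. Then $A$ is an input type: for every normal $\lambda$-term $t$, if $\vdash_{\mathcal F} t : A$ then $\vdash_{\mathcal F_0} t : A$.
   Context: $\lambda$-terms are those of the untyped $\lambda$-calculus; normal means without $\beta$-redex. Types of system $\mathcal F$: built from type variables with $\rightarrow$, $\forall$; only proper types (in every $\forall XA$, $X$ occurs free in $A$). Typing: (ax) $\Gamma \vdash x_i : A_i$ for $x_i:A_i\in\Gamma$; ($\rightarrow_i$) from $\Gamma, x:B \vdash t : C$ infer $\Gamma \vdash \lambda x t : B \rightarrow C$; ($\rightarrow_e$) from $\Gamma \vdash u : B\rightarrow C$, $\Gamma \vdash v : B$ infer $\Gamma \vdash (u)v : C$; ($\forall_i$) from $\Gamma \vdash t : A$, $X$ not free in $\Gamma$, infer $\Gamma \vdash t : \forall X A$; ($\forall_e$) from $\Gamma \vdash t : \forall X A$ infer $\Gamma \vdash t : A[C/X]$ for any type $C$. $\mathcal F_0$ is $\mathcal F$ without ($\forall_e$). The classes $\forall^+$, $\forall^-$: every type variable is both; if $A$ is $\forall^+$ (resp. $\forall^-$) and $B$ is $\forall^-$ (resp. $\forall^+$) then $B\rightarrow A$ is $\forall^+$ (resp. $\forall^-$); if $A$ is $\forall^+$ and $X$ is free in $A$ then $\forall XA$ is $\forall^+$. *)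

theory Defs
  imports Main
begin

datatype trm = Var nat | Lam nat trm | App trm trm

fun is_lam :: "trm \<Rightarrow> bool" where
  "is_lam (Lam x t) = True"
| "is_lam _ = False"

fun normal :: "trm \<Rightarrow> bool" where
  "normal (Var x) = True"
| "normal (Lam x t) = normal t"
| "normal (App u v) = (\<not> is_lam u \<and> normal u \<and> normal v)"

section \<open>Types of system F, with de Bruijn indices for type variables\<close>

datatype ty = TV nat | Arr ty ty | All ty

fun fv :: "ty \<Rightarrow> nat set" where
  "fv (TV n) = {n}"
| "fv (Arr a b) = fv a \<union> fv b"
| "fv (All a) = (\<lambda>n. n - 1) ` (fv a - {0})"

definition closed :: "ty \<Rightarrow> bool" where
  "closed A \<longleftrightarrow> fv A = {}"

text \<open>proper: in every \<forall>X A, X (index 0 of the body) occurs free in A\<close>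
fun proper :: "ty \<Rightarrow> bool" where
  "proper (TV n) = True"
| "proper (Arr a b) = (proper a \<and> proper b)"
| "proper (All a) = (0 \<in> fv a \<and> proper a)"

fun shift :: "nat \<Rightarrow> nat \<Rightarrow> ty \<Rightarrow> ty" where
  "shift d c (TV n) = TV (if n < c then n else n + d)"
| "shift d c (Arr a b) = Arr (shift d c a) (shift d c b)"
| "shift d c (All a) = All (shift d (Suc c) a)"

fun subst :: "nat \<Rightarrow> ty \<Rightarrow> ty \<Rightarrow> ty" where
  "subst k C (TV n) = (if n < k then TV n else if n = k then shift k 0 C else TV (n - 1))"
| "subst k C (Arr a b) = Arr (subst k C a) (subst k C b)"
| "subst k C (All a) = All (subst (Suc k) C a)"

section \<open>Typing in F (e = True) and F_0 (e = False: no \<forall>-elimination)\<close>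

type_synonym ctx = "nat \<Rightarrow> ty option"

inductive typing :: "bool \<Rightarrow> ctx \<Rightarrow> trm \<Rightarrow> ty \<Rightarrow> bool" where
  ax: "\<Gamma> x = Some A \<Longrightarrow> typing e \<Gamma> (Var x) A"
| arrI: "proper B \<Longrightarrow> typing e (\<Gamma>(x \<mapsto> B)) t C \<Longrightarrow> typing e \<Gamma> (Lam x t) (Arr B C)"
| arrE: "typing e \<Gamma> u (Arr B C) \<Longrightarrow> typing e \<Gamma> v B \<Longrightarrow> typing e \<Gamma> (App u v) C"
| allI: "typing e (map_option (shift 1 0) \<circ> \<Gamma>) t A \<Longrightarrow> 0 \<in> fv A \<Longrightarrow> typing e \<Gamma> t (All A)"
| allE: "e \<Longrightarrow> typing e \<Gamma> t (All A) \<Longrightarrow> proper C \<Longrightarrow> typing e \<Gamma> t (subst 0 C A)"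

abbreviation typF :: "ctx \<Rightarrow> trm \<Rightarrow> ty \<Rightarrow> bool" where
  "typF \<equiv> typing True"

abbreviation typF0 :: "ctx \<Rightarrow> trm \<Rightarrow> ty \<Rightarrow> bool" where
  "typF0 \<equiv> typing False"

section \<open>The classes \<forall>+ and \<forall>-\<close>

inductive pos and neg :: "ty \<Rightarrow> bool" where
  pos_TV: "pos (TV n)"
| neg_TV: "neg (TV n)"
| pos_Arr: "neg B \<Longrightarrow> pos A \<Longrightarrow> pos (Arr B A)"
| neg_Arr: "pos B \<Longrightarrow> neg A \<Longrightarrow> neg (Arr B A)"
| pos_All: "pos A \<Longrightarrow> 0 \<in> fv A \<Longrightarrow> pos (All A)"

end

theory Submission
  imports Defs
begin

lemma shift0[simp]: "shift 0 c X = X" by (induction X arbitrary: c) auto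

lemma shift_shift: "d \<le> c \<Longrightarrow> c \<le> d + b \<Longrightarrow> shift a c (shift b d X) = shift (a+b) d X"
  by (induction X arbitrary: c d) auto

lemma fv_shift_le: "n \<in> fv (shift d c X) \<Longrightarrow> n < c \<or> c + d \<le> n"
proof (induction X arbitrary: c n)
  case (All X)
  then obtain m where "m \<in> fv (shift d (Suc c) X)" "m \<noteq> 0" "n = m - 1" by auto
  with All.IH[where c="Suc c" and n=m] show ?case by auto
qed auto

lemma fv_shift_lt: "n \<in> fv X \<Longrightarrow> n < c \<Longrightarrow> n \<in> fv (shift d c X)"
proof (induction X arbitrary: c n)
  case (All X)
  then obtain m where "m \<in> fv X" "m \<noteq> 0" "n = m - 1" by auto
  with All.IH[where c="Suc c" and n=m] All.prems show ?case by (auto intro!: rev_image_eqI[of m])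
qed auto

lemma fv_subst_lt: "n \<in> fv X \<Longrightarrow> n < k \<Longrightarrow> n \<in> fv (subst k C X)"
proof (induction X arbitrary: k n)
  case (All X)
  then obtain m where "m \<in> fv X" "m \<noteq> 0" "n = m - 1" by auto
  with All.IH[where k="Suc k" and n=m] All.prems show ?case by (auto intro!: rev_image_eqI[of m])
qed auto

lemma proper_shift: "proper X \<Longrightarrow> proper (shift d c X)"
  by (induction X arbitrary: c) (auto intro: fv_shift_lt)

lemma proper_subst: "proper X \<Longrightarrow> proper C \<Longrightarrow> proper (subst k C X)"
  by (induction X arbitrary: k) (auto intro: fv_subst_lt proper_shift)

lemma S1: "d \<le> j \<Longrightarrow> subst (j + c) C (shift c d X) = shift c d (subst j C X)"
proof (induction X arbitrary: j d)
  case (TV n)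
  have "shift c d (shift j 0 C) = shift (c+j) 0 C" using TV by (simp add: shift_shift)
  with TV show ?case by (auto simp: add.commute)
next
  case (All X) then show ?case using All.IH[where d="Suc d" and j="Suc j"] by simp
qed auto

lemma S2: "d \<le> c \<Longrightarrow> c \<le> d + k \<Longrightarrow> subst c D (shift (Suc k) d X) = shift k d X"
  by (induction X arbitrary: c d) auto

lemma subst_subst: "c \<le> k \<Longrightarrow> subst k C (subst c D A) = subst c (subst (k - c) C D) (subst (Suc k) C A)"
proof (induction A arbitrary: c k)
  case (TV n)
  have a: "subst k C (shift c 0 D) = shift c 0 (subst (k - c) C D)"
    using S1[of 0 "k - c" c C D] TV by simp
  have b: "subst c (subst (k - c) C D) (shift (Suc k) 0 C) = shift k 0 C"
    using S2[of 0 c k] TV by simp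
  show ?case using TV a b by auto
qed auto


lemma shift0_fun[simp]: "shift 0 c = (\<lambda>x. x)" by (rule ext) simp

lemma ctx_shift0[simp]: "map_option (shift 0 0) \<circ> \<Gamma> = \<Gamma>"
  by (rule ext) (simp add: option.map_ident)

lemma ctx_shift_comp: "map_option (shift k 0) \<circ> (map_option (shift 1 0) \<circ> \<Gamma>) = map_option (shift (Suc k) 0) \<circ> \<Gamma>"
  by (rule ext) (auto simp: option.map_comp shift_shift comp_def)

lemma subst_typing: "typing e \<Delta> t T \<Longrightarrow> proper C \<Longrightarrow> typing e (map_option (subst k C) \<circ> \<Delta>) t (subst k C T)"
proof (induction arbitrary: k rule: typing.induct)
  case (ax \<Gamma> x A e) then show ?case by (auto intro: typing.ax)
next
  case (arrI B e \<Gamma> x t C')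
  have "typing e ((map_option (subst k C) \<circ> \<Gamma>)(x \<mapsto> subst k C B)) t (subst k C C')"
  proof -
    have eq: "map_option (subst k C) \<circ> \<Gamma>(x \<mapsto> B) = (map_option (subst k C) \<circ> \<Gamma>)(x \<mapsto> subst k C B)"
      by (rule ext) simp
    show ?thesis using arrI.IH[OF arrI.prems, of k] unfolding eq .
  qed
  then show ?case unfolding subst.simps by (rule typing.arrI[OF proper_subst[OF arrI.hyps(1) arrI.prems]])
next
  case (arrE e \<Gamma> u B C' v) then show ?case by (auto intro: typing.arrE)
next
  case (allI e \<Gamma> t A)
  have eq: "map_option (subst (Suc k) C) \<circ> (map_option (shift 1 0) \<circ> \<Gamma>)
     = map_option (shift 1 0) \<circ> (map_option (subst k C) \<circ> \<Gamma>)"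
    using S1[of 0 k 1 C] by (intro ext) (auto simp: option.map_comp comp_def)
  have "typing e (map_option (subst (Suc k) C) \<circ> (map_option (shift 1 0) \<circ> \<Gamma>)) t (subst (Suc k) C A)"
    by (rule allI.IH[OF allI.prems])
  then have "typing e (map_option (shift 1 0) \<circ> (map_option (subst k C) \<circ> \<Gamma>)) t (subst (Suc k) C A)"
    unfolding eq .
  then show ?case unfolding subst.simps
    by (rule typing.allI) (rule fv_subst_lt[OF allI.hyps(2)], simp)
next
  case (allE e \<Gamma> t A D)
  have "typing e (map_option (subst k C) \<circ> \<Gamma>) t (subst 0 (subst k C D) (subst (Suc k) C A))"
    by (rule typing.allE[OF allE.hyps(1) allE.IH[OF allE.prems, of k, unfolded subst.simps] proper_subst[OF allE.hyps(3) allE.prems]])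
  moreover have eq2: "subst k C (subst 0 D A) = subst 0 (subst k C D) (subst (Suc k) C A)"
    using subst_subst[of 0 k C D A] by simp
  ultimately show ?case by (simp only: eq2)
qed

fun Alls :: "nat \<Rightarrow> ty \<Rightarrow> ty" where
  "Alls 0 X = X"
| "Alls (Suc k) X = All (Alls k X)"

lemma subst_Alls: "subst c C (Alls j X) = Alls j (subst (c+j) C X)"
  by (induction j arbitrary: c) auto

lemma gen_lam: "typing e \<Gamma> t T \<Longrightarrow> t = Lam x s \<Longrightarrow>
  \<exists>k B D. T = Alls k (Arr B D) \<and> typing e ((map_option (shift k 0) \<circ> \<Gamma>)(x \<mapsto> B)) s D"
proof (induction rule: typing.induct)
  case (arrI B e \<Gamma> x' t C)
  then show ?case by (intro exI[of _ 0]) (auto simp: option.map_ident fun_upd_def comp_def)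
next
  case (allI e \<Gamma> t A)
  then obtain k B D where "A = Alls k (Arr B D)"
    "typing e ((map_option (shift k 0) \<circ> (map_option (shift 1 0) \<circ> \<Gamma>))(x \<mapsto> B)) s D" by blast
  note A = this(1)
  have h: "typing e ((map_option (shift (Suc k) 0) \<circ> \<Gamma>)(x \<mapsto> B)) s D"
    using \<open>typing e ((map_option (shift k 0) \<circ> (map_option (shift 1 0) \<circ> \<Gamma>))(x \<mapsto> B)) s D\<close>
    unfolding ctx_shift_comp .
  have "All A = Alls (Suc k) (Arr B D)" using A by simp
  with h show ?case by blast
next
  case (allE e \<Gamma> t A C)
  then obtain k B D where k: "All A = Alls k (Arr B D)"
    "typing e ((map_option (shift k 0) \<circ> \<Gamma>)(x \<mapsto> B)) s D" by blast
  then obtain j where j: "k = Suc j" by (cases k) auto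
  with k have A: "A = Alls j (Arr B D)" by simp
  have "typing e (map_option (subst j C) \<circ> ((map_option (shift k 0) \<circ> \<Gamma>)(x \<mapsto> B))) s (subst j C D)"
    using subst_typing[OF k(2) allE(3)] .
  moreover have "map_option (subst j C) \<circ> ((map_option (shift k 0) \<circ> \<Gamma>)(x \<mapsto> B))
     = (map_option (shift j 0) \<circ> \<Gamma>)(x \<mapsto> subst j C B)"
    using S2[of 0 j j] j by (intro ext) (auto simp: option.map_comp comp_def)
  ultimately have "typing e ((map_option (shift j 0) \<circ> \<Gamma>)(x \<mapsto> subst j C B)) s (subst j C D)"
    by (simp only:)
  moreover have "subst 0 C A = Alls j (Arr (subst j C B) (subst j C D))"
    using A by (simp add: subst_Alls)
  ultimately show ?case by blast
qed auto

lemma pos_proper: "pos X \<Longrightarrow> proper X" and neg_proper: "neg X \<Longrightarrow> proper X"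
  by (induction rule: pos_neg.inducts) auto

lemma pos_shift: "pos X \<Longrightarrow> pos (shift d c X)" and neg_shift: "neg X \<Longrightarrow> neg (shift d c X)"
  by (induction X and X arbitrary: c and c rule: pos_neg.inducts)
     (auto intro: pos_neg.intros fv_shift_lt)

inductive_cases posAllE: "pos (All A)"
inductive_cases posArrE: "pos (Arr B A)"
inductive_cases negArrE: "neg (Arr B A)"
inductive_cases negAllE: "neg (All A)"

lemma pos_Alls: "pos (Alls k X) \<Longrightarrow> pos X"
  by (induction k) (auto elim: posAllE)

lemma rebuild: "typing False (map_option (shift k 0) \<circ> \<Gamma>) t X \<Longrightarrow> pos (Alls k X) \<Longrightarrow> typing False \<Gamma> t (Alls k X)"
proof (induction k arbitrary: \<Gamma>)
  case 0 then show ?case by (simp add: option.map_ident)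
next
  case (Suc k)
  from Suc.prems(2) have p: "pos (Alls k X)" "0 \<in> fv (Alls k X)" by (auto elim: posAllE)
  have "typing False (map_option (shift 1 0) \<circ> \<Gamma>) t (Alls k X)"
    using Suc.IH[of "map_option (shift 1 0) \<circ> \<Gamma>"] Suc.prems p unfolding ctx_shift_comp by blast
  then show ?case using p by (auto intro: typing.allI)
qed


fun suffs :: "ty \<Rightarrow> ty set" where
  "suffs (Arr B D) = insert (Arr B D) (suffs D)"
| "suffs X = {X}"

lemma suffs_self: "X \<in> suffs X" by (cases X) auto

lemma suffs_neg: "X \<in> suffs E \<Longrightarrow> neg E \<Longrightarrow> neg X"
  by (induction E) (auto elim: negArrE)

lemma suffs_fv: "X \<in> suffs E \<Longrightarrow> fv X \<subseteq> fv E"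
  by (induction E) auto

lemma suffs_Arr: "Arr B C \<in> suffs E \<Longrightarrow> C \<in> suffs E"
  by (induction E) (auto simp: suffs_self)

fun head :: "trm \<Rightarrow> nat" where
  "head (Var x) = x"
| "head (App u v) = head u"
| "head (Lam x t) = x"

fun args :: "trm \<Rightarrow> trm list" where
  "args (App u v) = args u @ [v]"
| "args _ = []"

lemma args_size: "v \<in> set (args t) \<Longrightarrow> size v < size t"
  by (induction t) auto

definition negctx :: "ctx \<Rightarrow> bool" where
  "negctx \<Gamma> \<longleftrightarrow> (\<forall>x E. \<Gamma> x = Some E \<longrightarrow> neg E)"

lemma negctx_shift: "negctx \<Gamma> \<Longrightarrow> negctx (map_option (shift d c) \<circ> \<Gamma>)"
  unfolding negctx_def by (auto intro: neg_shift)

lemma negctx_upd: "negctx \<Gamma> \<Longrightarrow> neg B \<Longrightarrow> negctx (\<Gamma>(x \<mapsto> B))"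
  unfolding negctx_def by auto

lemma nonlam: "typing e \<Gamma> t T \<Longrightarrow> e \<Longrightarrow> negctx \<Gamma> \<Longrightarrow> \<not> is_lam t \<Longrightarrow> normal t \<Longrightarrow>
  (\<forall>v \<in> set (args t). \<forall>\<Gamma>' T'. negctx \<Gamma>' \<longrightarrow> typF \<Gamma>' v T' \<longrightarrow> pos T' \<longrightarrow> typF0 \<Gamma>' v T') \<Longrightarrow>
  (\<exists>E. \<Gamma> (head t) = Some E \<and> T \<in> suffs E) \<and> typF0 \<Gamma> t T"
proof (induction rule: typing.induct)
  case (ax \<Gamma> x A e)
  then show ?case by (auto intro: typing.ax suffs_self)
next
  case (arrI B e \<Gamma> x t C)
  then show ?case by simp
next
  case (arrE e \<Gamma> u B C v)
  from arrE.prems have u: "\<not> is_lam u" "normal u" by auto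
  from arrE.IH(1)[OF arrE.prems(1,2) u] arrE.prems(5)
  obtain E where E: "\<Gamma> (head u) = Some E" "Arr B C \<in> suffs E" and tu: "typF0 \<Gamma> u (Arr B C)" by auto
  have "neg E" using E(1) arrE.prems(2) unfolding negctx_def by auto
  then have "neg (Arr B C)" using E(2) suffs_neg by blast
  then have "pos B" by (auto elim: negArrE)
  then have tv: "typF0 \<Gamma> v B" using arrE.prems(2,5) arrE.hyps(2) arrE.prems(1) by auto
  show ?case using E suffs_Arr tu tv by (auto intro: typing.arrE)
next
  case (allI e \<Gamma> t A)
  then obtain E where E: "(map_option (shift 1 0) \<circ> \<Gamma>) (head t) = Some E" "A \<in> suffs E"
    using negctx_shift by blast
  then obtain E0 where "E = shift 1 0 E0" by auto
  moreover have "0 \<in> fv E" using E(2) suffs_fv allI.hyps(2) by blast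
  ultimately show ?case using fv_shift_le[of 0 1 0 E0] by simp
next
  case (allE e \<Gamma> t A C)
  then obtain E where E: "\<Gamma> (head t) = Some E" "All A \<in> suffs E" by blast
  have "neg E" using E(1) allE.prems(2) unfolding negctx_def by auto
  then have "neg (All A)" using E(2) suffs_neg by blast
  then show ?case by (auto elim: negAllE)
qed

lemma main: "normal t \<Longrightarrow> negctx \<Gamma> \<Longrightarrow> typF \<Gamma> t T \<Longrightarrow> pos T \<Longrightarrow> typF0 \<Gamma> t T"
proof (induction "size t" arbitrary: t \<Gamma> T rule: less_induct)
  case less
  show ?case
  proof (cases "is_lam t")
    case False
    have H: "typF0 \<Gamma>' v T'" if v: "v \<in> set (args t)" and h: "negctx \<Gamma>'" "typF \<Gamma>' v T'" "pos T'" for v \<Gamma>' T'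
    proof -
      have "normal v" using v less.prems(1) by (induction t rule: args.induct) auto
      then show "typF0 \<Gamma>' v T'" using less.hyps[OF args_size[OF v]] h by blast
    qed
    show ?thesis using nonlam[OF less.prems(3) _ less.prems(2) False less.prems(1)] H by blast
  next
    case True
    then obtain x s where t: "t = Lam x s" by (cases t) auto
    obtain k B D where T: "T = Alls k (Arr B D)"
      and ts: "typF ((map_option (shift k 0) \<circ> \<Gamma>)(x \<mapsto> B)) s D"
      using gen_lam[OF less.prems(3) t] by blast
    have "pos (Arr B D)" using less.prems(4) T pos_Alls by blast
    then have BD: "neg B" "pos D" by (auto elim: posArrE)
    have "negctx ((map_option (shift k 0) \<circ> \<Gamma>)(x \<mapsto> B))"
      using negctx_upd[OF negctx_shift[OF less.prems(2)] BD(1)] .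
    moreover have "normal s" using less.prems(1) t by simp
    ultimately have "typF0 ((map_option (shift k 0) \<circ> \<Gamma>)(x \<mapsto> B)) s D"
      using less.hyps[of s] t ts BD(2) by auto
    then have "typF0 (map_option (shift k 0) \<circ> \<Gamma>) (Lam x s) (Arr B D)"
      using neg_proper[OF BD(1)] by (auto intro: typing.arrI)
    then show ?thesis using rebuild less.prems(4) T t by blast
  qed
qed

theorem theorem2p2p3:
  fixes A :: ty and t :: trm
  assumes "proper A" and "closed A" and "pos A"
    and "normal t"
    and "typF Map.empty t A"
  shows "typF0 Map.empty t A"
  using main[OF assms(4) _ assms(5) assms(3)] by (simp add: negctx_def)

end
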